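(* Let $\pi_1,\pi_2\colon\mathsf{States}\to\mathbb{R}_{\ge0}$ be potential functions such that $\pi_1\preceq\pi_1\oplus\pi_2$ (where $\pi_1\oplus\pi_2$ is itself used as a potential function). Then for every program $C$ and every $X\in\mathbb{A}_{\pi_1}$: if $\mathrm{mod}(C)\cap\mathrm{Vars}(\pi_2)=\emptyset$ and $X+(\pi_1\oplus\pi_2)\preceq(X+\pi_1)\oplus\pi_2$, then $$\mathsf{aert}_{\pi_1\oplus\pi_2}[\![C]\!](X)\;\preceq\;\big(\mathsf{aert}_{\pi_1}[\![C]\!](X)+\pi_1\big)\oplus\pi_2\;-\;\pi_1\oplus\pi_2 .$$
   Context: States and programs. Fix a finite set $\mathrm{Vars}$ of variables; values are $\mathbb{N}$, locations are $\mathbb{N}_{>0}$. A stack is $s\colon \mathrm{Vars}\to\mathbb{N}$; a heap is a partial map $h$ from a finite set $\mathrm{dom}(h)\subseteq\mathbb{N}_{>0}$ to $\mathbb{N}$. $h_1\perp h_2$ means disjoint domains; then $h_1\star h_2$ is their union; $h_\emptyset$ is the empty heap. $\mathsf{States}$ is the set of pairs $(s,h)$. $s(e)$ is the value of a (heap-independent) arithmetic expression $e$ under $s$, $s\models\varphi$ means the Boolean expression $\varphi$ holds under $s$, $s[x\mapsto v]$ is the updated stack. Programs are generated by $C ::= \mathtt{tick}(e) \mid x:=e \mid x:=\mathtt{alloc}(e) \mid \langle e\rangle:=e' \mid x:=\langle e\rangle \mid \mathtt{free}(e) \mid \{C\}[p]\{C\} \mid \mathtt{if}(\varphi)\{C\}\mathtt{else}\{C\}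 \mid C;C \mid \mathtt{while}(\varphi)\{C\}$, where $p$ is an expression with $s(p)\in[0,1]\cap\mathbb{Q}$ for all $s$. The statements other than tick, probabilistic choice, conditional, sequencing and loops are called atomic. $\mathrm{mod}(C)$ is the set of variables potentially modified by $C$, i.e. the variables $x$ occurring as the target of $x:=e$, $x:=\mathtt{alloc}(e)$ or $x:=\langle e\rangle$ in $C$. For a function $g$ on states, $x\notin\mathrm{Vars}(g)$ means $g(s[x\mapsto v],h)=g(s,h)$ for all $(s,h)$ and $v$. Runtimes. $\mathbb{T}$ is the set of functions $\mathsf{States}\to[0,\infty]$, ordered pointwise by $\preceq$; arithmetic is pointwise with $0\cdot\infty=0$. $[\varphi]$ is the $0/1$-valued Iverson bracket. Truncated subtraction: $a\dot- b=\max(a-b,0)$, $\infty\dot- b=\infty$ for finite $b$, $a\dot-\infty=0$. Separating sum $(f\oplus g)(s,h)=\min\{f(s,h_1)+g(s,h_2)\mid h=h_1\star h_2\}$ (for nonnegative $f,g$); $(f \mathbin{-\!\!\ominus} g)(s,h)=\sup\{g(s,h\star h')\dot- f(s,h')\mid h'\perp h\}$; $(\inf y\colon f)(s,h)=\inf_{v\in\mathbb{N}} f(s[y\mapsto v],h)$, $(\sup y\colon f)(s,h)=\sup_{v\in\mathbb{N}}f(s[y\mapsto v],h)$; $f[x/e](s,h)=f(s[x\mapsto s(e)],h)$. $\mathsf{tm}(e)(s,h)=s(e)$ if $h=h_\emptyset$, else $\infty$; $[e\mapsto e'](s,h)=0$ if $\mathrm{dom}(h)=\{s(e)\}$ and $h(s(e))=s(e')$,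 else $\infty$; $[e\mapsto -](s,h)=0$ if $\mathrm{dom}(h)=\{s(e)\}$, else $\infty$; $\bigoplus_{i=1}^{e} f_i$ is the separating sum over $i=1,\dots,s(e)$ (empty one: $[\mathsf{emp}]$, which is $0$ if $h=h_\emptyset$, else $\infty$). $\mathsf{ert}[\![C]\!]\colon\mathbb{T}\to\mathbb{T}$ (with $v$ fresh): $\mathsf{ert}[\![\mathtt{tick}(e)]\!](f)=\mathsf{tm}(e)\oplus f$; $\mathsf{ert}[\![x:=e]\!](f)=f[x/e]$; $\mathsf{ert}[\![x:=\mathtt{alloc}(e)]\!](f)=\sup v\colon (\bigoplus_{i=1}^{e}[v+i-1\mapsto 0])\mathbin{-\!\!\ominus} f[x/v]$; $\mathsf{ert}[\![\langle e\rangle:=e']\!](f)=[e\mapsto-]\oplus([e\mapsto e']\mathbin{-\!\!\ominus} f)$; $\mathsf{ert}[\![x:=\langle e\rangle]\!](f)=\inf v\colon [e\mapsto v]\oplus([e\mapsto v]\mathbin{-\!\!\ominus} f[x/v])$; $\mathsf{ert}[\![\mathtt{free}(e)]\!](f)=[e\mapsto-]\oplus f$; $\mathsf{ert}[\![C_1;C_2]\!](f)=\mathsf{ert}[\![C_1]\!](\mathsf{ert}[\![C_2]\!](f))$; conditional: $[\varphi]\cdot\mathsf{ert}[\![C_1]\!](f)+[\neg\varphi]\cdot\mathsf{ert}[\![C_2]\!](f)$; probabilistic choice: $p\cdot\mathsf{ert}[\![C_1]\!](f)+(1-p)\cdot\mathsf{ert}[\![C_2]\!](f)$; $\mathsf{ert}[\![\mathtt{while}(\varphi)\{C\}]\!](f)=\mathrm{lfp}\,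 g.\ [\neg\varphi]\cdot f+[\varphi]\cdot\mathsf{ert}[\![C]\!](g)$. Amortized runtimes. A potential function is $\pi\colon\mathsf{States}\to\mathbb{R}_{\ge0}$. $\mathbb{A}_\pi=\{X\colon\mathsf{States}\to\mathbb{R}\cup\{\infty\}\mid -\pi\le X\}$, ordered pointwise (complete lattice, least element $-\pi$). $\mathsf{aert}_\pi[\![C]\!]\colon\mathbb{A}_\pi\to\mathbb{A}_\pi$: $\mathsf{aert}_\pi[\![\mathtt{tick}(e)]\!](X)=e+X$; for atomic $C$ other than tick, $\mathsf{aert}_\pi[\![C]\!](X)=\mathsf{ert}[\![C]\!](X+\pi)-\pi$; sequencing by composition; conditional $[\varphi]\cdot\mathsf{aert}_\pi[\![C_1]\!](X)+[\neg\varphi]\cdot\mathsf{aert}_\pi[\![C_2]\!](X)$; probabilistic choice $p\cdot\mathsf{aert}_\pi[\![C_1]\!](X)+(1-p)\cdot\mathsf{aert}_\pi[\![C_2]\!](X)$; $\mathsf{aert}_\pi[\![\mathtt{while}(\varphi)\{C'\}]\!](X)=\mathrm{lfp}\,Y.\ [\neg\varphi]\cdot X+[\varphi]\cdot\mathsf{aert}_\pi[\![C']\!](Y)$ in $(\mathbb{A}_\pi,\preceq)$. *)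

theory Defs
  imports Complex_Main "HOL-Library.Extended_Nonnegative_Real"
begin

type_synonym 'v stack = "'v \<Rightarrow> nat"

typedef heap = "{h :: nat \<rightharpoonup> nat. finite (dom h) \<and> 0 \<notin> dom h}"
  by (rule exI[of _ Map.empty]) auto

definition hdisj :: "heap \<Rightarrow> heap \<Rightarrow> bool" where
  "hdisj h1 h2 = (dom (Rep_heap h1) \<inter> dom (Rep_heap h2) = {})"

definition hunion :: "heap \<Rightarrow> heap \<Rightarrow> heap" where
  "hunion h1 h2 = Abs_heap (Rep_heap h1 ++ Rep_heap h2)"

definition hemp :: heap where
  "hemp = Abs_heap Map.empty"

type_synonym 'v state = "'v stack \<times> heap"

type_synonym 'v aexp = "'v stack \<Rightarrow> nat"
type_synonym 'v bexp = "'v stack \<Rightarrow> bool"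
type_synonym 'v pexp = "'v stack \<Rightarrow> real"

datatype 'v prog =
    Tick "'v aexp"
  | Assign 'v "'v aexp"
  | Alloc 'v "'v aexp"
  | Store "'v aexp" "'v aexp"          (* <e> := e' *)
  | Load 'v "'v aexp"                  (* x := <e> *)
  | Free "'v aexp"
  | PChoice "'v prog" "'v pexp" "'v prog"
  | If "'v bexp" "'v prog" "'v prog"
  | Seq "'v prog" "'v prog"
  | While "'v bexp" "'v prog"

primrec wf_prog :: "'v prog \<Rightarrow> bool" where
  "wf_prog (Tick e) = True"
| "wf_prog (Assign x e) = True"
| "wf_prog (Alloc x e) = True"
| "wf_prog (Store e e') = True"
| "wf_prog (Load x e) = True"
| "wf_prog (Free e) = True"
| "wf_prog (PChoice c1 p c2) =
     ((\<forall>s. p s \<in> \<rat> \<and> 0 \<le> p s \<and> p s \<le> 1) \<and> wf_prog c1 \<and> wf_prog c2)"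
| "wf_prog (If b c1 c2) = (wf_prog c1 \<and> wf_prog c2)"
| "wf_prog (Seq c1 c2) = (wf_prog c1 \<and> wf_prog c2)"
| "wf_prog (While b c) = wf_prog c"

primrec modv :: "'v prog \<Rightarrow> 'v set" where
  "modv (Tick e) = {}"
| "modv (Assign x e) = {x}"
| "modv (Alloc x e) = {x}"
| "modv (Store e e') = {}"
| "modv (Load x e) = {x}"
| "modv (Free e) = {}"
| "modv (PChoice c1 p c2) = modv c1 \<union> modv c2"
| "modv (If b c1 c2) = modv c1 \<union> modv c2"
| "modv (Seq c1 c2) = modv c1 \<union> modv c2"
| "modv (While b c) = modv c"

definition not_in_vars :: "'v \<Rightarrow> ('v state \<Rightarrow> 'a) \<Rightarrow> bool" where
  "not_in_vars x g = (\<forall>s h v. g (s(x := v), h) = g (s, h))"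

definition sepsum :: "('v state \<Rightarrow> 'a::{plus,Inf}) \<Rightarrow> ('v state \<Rightarrow> 'a) \<Rightarrow> 'v state \<Rightarrow> 'a" where
  "sepsum f g = (\<lambda>(s, h). Inf {f (s, h1) + g (s, h2) | h1 h2. hdisj h1 h2 \<and> h = hunion h1 h2})"

definition tsub :: "ennreal \<Rightarrow> ennreal \<Rightarrow> ennreal" where
  "tsub a b = (if b = top then 0 else a - b)"

definition wand :: "('v state \<Rightarrow> ennreal) \<Rightarrow> ('v state \<Rightarrow> ennreal) \<Rightarrow> 'v state \<Rightarrow> ennreal" where
  "wand f g = (\<lambda>(s, h). SUP h' \<in> {h'. hdisj h h'}. tsub (g (s, hunion h h')) (f (s, h')))"

definition tm :: "'v aexp \<Rightarrow> 'v state \<Rightarrow> ennreal" where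
  "tm e = (\<lambda>(s, h). if h = hemp then ennreal (real (e s)) else top)"

definition emp :: "'v state \<Rightarrow> ennreal" where
  "emp = (\<lambda>(s, h). if h = hemp then 0 else top)"

definition pt :: "'v aexp \<Rightarrow> 'v aexp \<Rightarrow> 'v state \<Rightarrow> ennreal" where
  "pt e e' = (\<lambda>(s, h). if dom (Rep_heap h) = {e s} \<and> Rep_heap h (e s) = Some (e' s) then 0 else top)"

definition pt_any :: "'v aexp \<Rightarrow> 'v state \<Rightarrow> ennreal" where
  "pt_any e = (\<lambda>(s, h). if dom (Rep_heap h) = {e s} then 0 else top)"

primrec bigsep :: "(nat \<Rightarrow> 'v state \<Rightarrow> ennreal) \<Rightarrow> nat \<Rightarrow> 'v state \<Rightarrow> ennreal" where
  "bigsep F 0 = emp"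
| "bigsep F (Suc n) = sepsum (bigsep F n) (F (Suc n))"

definition subst :: "('v state \<Rightarrow> 'a) \<Rightarrow> 'v \<Rightarrow> 'v aexp \<Rightarrow> 'v state \<Rightarrow> 'a" where
  "subst f x e = (\<lambda>(s, h). f (s(x := e s), h))"

text \<open>The fresh logical variable v of alloc / lookup is rendered directly
  as a bound value n.\<close>
primrec ert :: "'v prog \<Rightarrow> ('v state \<Rightarrow> ennreal) \<Rightarrow> 'v state \<Rightarrow> ennreal" where
  "ert (Tick e) f = sepsum (tm e) f"
| "ert (Assign x e) f = subst f x e"
| "ert (Alloc x e) f = (\<lambda>(s, h). SUP n. wand
       (\<lambda>(s', h'). bigsep (\<lambda>i. pt (\<lambda>_. n + i - 1) (\<lambda>_. 0)) (e s') (s', h'))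
       (subst f x (\<lambda>_. n)) (s, h))"
| "ert (Store e e') f = sepsum (pt_any e) (wand (pt e e') f)"
| "ert (Load x e) f = (\<lambda>\<sigma>. INF n. sepsum (pt e (\<lambda>_. n))
       (wand (pt e (\<lambda>_. n)) (subst f x (\<lambda>_. n))) \<sigma>)"
| "ert (Free e) f = sepsum (pt_any e) f"
| "ert (PChoice c1 p c2) f = (\<lambda>\<sigma>. ennreal (p (fst \<sigma>)) * ert c1 f \<sigma>
       + ennreal (1 - p (fst \<sigma>)) * ert c2 f \<sigma>)"
| "ert (If b c1 c2) f = (\<lambda>\<sigma>. if b (fst \<sigma>) then ert c1 f \<sigma> else ert c2 f \<sigma>)"
| "ert (Seq c1 c2) f = ert c1 (ert c2 f)"
| "ert (While b c) f = lfp (\<lambda>g \<sigma>. if b (fst \<sigma>) then ert c g \<sigma> else f \<sigma>)"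

text \<open>Elements of A_\<pi> are ereal-valued functions X with -\<pi> \<le> X (hence never -\<infinity>).
  For atomic non-tick statements: ert(X + \<pi>) - \<pi>.\<close>
definition aert_atomic :: "('v state \<Rightarrow> real) \<Rightarrow> 'v prog \<Rightarrow> ('v state \<Rightarrow> ereal) \<Rightarrow> 'v state \<Rightarrow> ereal" where
  "aert_atomic \<pi> c X = (\<lambda>\<sigma>. enn2ereal (ert c (\<lambda>\<tau>. e2ennreal (X \<tau> + ereal (\<pi> \<tau>))) \<sigma>) - ereal (\<pi> \<sigma>))"

primrec aert :: "('v state \<Rightarrow> real) \<Rightarrow> 'v prog \<Rightarrow> ('v state \<Rightarrow> ereal) \<Rightarrow> 'v state \<Rightarrow> ereal" where
  "aert \<pi> (Tick e) X = (\<lambda>\<sigma>. ereal (real (e (fst \<sigma>))) + X \<sigma>)"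
| "aert \<pi> (Assign x e) X = aert_atomic \<pi> (Assign x e) X"
| "aert \<pi> (Alloc x e) X = aert_atomic \<pi> (Alloc x e) X"
| "aert \<pi> (Store e e') X = aert_atomic \<pi> (Store e e') X"
| "aert \<pi> (Load x e) X = aert_atomic \<pi> (Load x e) X"
| "aert \<pi> (Free e) X = aert_atomic \<pi> (Free e) X"
| "aert \<pi> (PChoice c1 p c2) X = (\<lambda>\<sigma>. ereal (p (fst \<sigma>)) * aert \<pi> c1 X \<sigma>
       + ereal (1 - p (fst \<sigma>)) * aert \<pi> c2 X \<sigma>)"
| "aert \<pi> (If b c1 c2) X = (\<lambda>\<sigma>. if b (fst \<sigma>) then aert \<pi> c1 X \<sigma> else aert \<pi> c2 X \<sigma>)"
| "aert \<pi> (Seq c1 c2) X = aert \<pi> c1 (aert \<pi> c2 X)"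
| "aert \<pi> (While b c) X =
     Inf {Y. (\<forall>\<sigma>. - ereal (\<pi> \<sigma>) \<le> Y \<sigma>)
           \<and> (\<forall>\<sigma>. (if b (fst \<sigma>) then aert \<pi> c Y \<sigma> else X \<sigma>) \<le> Y \<sigma>)}"

end

theory Submission
  imports Defs
begin

lemma Rep_hunion: "Rep_heap (hunion h1 h2) = Rep_heap h1 ++ Rep_heap h2"
proof -
  have "finite (dom (Rep_heap h1))" "0 \<notin> dom (Rep_heap h1)"
       "finite (dom (Rep_heap h2))" "0 \<notin> dom (Rep_heap h2)"
    using Rep_heap[of h1] Rep_heap[of h2] by auto
  then show ?thesis unfolding hunion_def by (subst Abs_heap_inverse) auto
qed

lemma Rep_hemp: "Rep_heap hemp = Map.empty"
  unfolding hemp_def by (subst Abs_heap_inverse) auto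

lemma heap_eqI: "Rep_heap a = Rep_heap b \<Longrightarrow> a = b"
  by (simp add: Rep_heap_inject)

lemma hunion_emp[simp]: "hunion hemp h = h" "hunion h hemp = h"
  by (auto intro!: heap_eqI simp: Rep_hunion Rep_hemp)

lemma hdisj_emp[simp]: "hdisj hemp h" "hdisj h hemp"
  by (auto simp: hdisj_def Rep_hemp)

lemma hdisj_sym: "hdisj a b = hdisj b a"
  by (auto simp: hdisj_def)

lemma hunion_comm: "hdisj a b \<Longrightarrow> hunion a b = hunion b a"
  by (metis heap_eqI Rep_hunion hdisj_def map_add_comm)

lemma hunion_assoc: "hunion (hunion a b) c = hunion a (hunion b c)"
  by (auto intro!: heap_eqI simp: Rep_hunion)

lemma hdisj_union_l: "hdisj (hunion a b) c = (hdisj a c \<and> hdisj b c)"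
  by (auto simp: hdisj_def Rep_hunion)

lemma hdisj_union_r: "hdisj c (hunion a b) = (hdisj c a \<and> hdisj c b)"
  by (auto simp: hdisj_def Rep_hunion)

definition splits :: "heap \<Rightarrow> (heap \<times> heap) set" where
  "splits h = {(h1, h2). hdisj h1 h2 \<and> h = hunion h1 h2}"

lemma finite_splits: "finite (splits h)"
proof -
  let ?f = "\<lambda>A. (Abs_heap (Rep_heap h |` A), Abs_heap (Rep_heap h |` (- A)))"
  have "splits h \<subseteq> ?f ` Pow (dom (Rep_heap h))"
  proof
    fix p assume "p \<in> splits h"
    then obtain h1 h2 where p: "p = (h1, h2)" "hdisj h1 h2" "h = hunion h1 h2"
      by (auto simp: splits_def)
    let ?A = "dom (Rep_heap h1)"
    have r: "Rep_heap h = Rep_heap h1 ++ Rep_heap h2" using p by (simp add: Rep_hunion)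
    have 1: "Rep_heap h |` ?A = Rep_heap h1"
      using p(2) unfolding r hdisj_def
      by (auto simp: restrict_map_def map_add_def fun_eq_iff split: option.splits)
    have 2: "Rep_heap h |` (- ?A) = Rep_heap h2"
      using p(2) unfolding r hdisj_def
      by (auto simp: restrict_map_def map_add_def fun_eq_iff split: option.splits)
    have "p = ?f ?A" using 1 2 p(1) by (simp add: Rep_heap_inverse)
    moreover have "?A \<in> Pow (dom (Rep_heap h))" using r by auto
    ultimately show "p \<in> ?f ` Pow (dom (Rep_heap h))" by blast
  qed
  moreover have "finite (dom (Rep_heap h))" using Rep_heap[of h] by auto
  ultimately show ?thesis by (meson finite_Pow_iff finite_imageI finite_subset)
qed

lemma sepsum_set:
  "{f (s, h1) + g (s, h2) | h1 h2. hdisj h1 h2 \<and> h = hunion h1 h2}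
   = (\<lambda>(h1, h2). f (s, h1) + g (s, h2)) ` splits h"
  by (auto simp: splits_def)

lemma sepsum_le:
  fixes f g :: "'v state \<Rightarrow> 'a::{conditionally_complete_linorder, plus}"
  assumes "hdisj h1 h2" "h = hunion h1 h2"
  shows "sepsum f g (s, h) \<le> f (s, h1) + g (s, h2)"
proof -
  have "finite ((\<lambda>(h1, h2). f (s, h1) + g (s, h2)) ` splits h)"
    by (simp add: finite_splits)
  then show ?thesis unfolding sepsum_def using assms
    by (auto simp: sepsum_set splits_def intro!: cInf_lower bdd_below_finite)
qed

lemma sepsum_ex:
  fixes f g :: "'v state \<Rightarrow> 'a::{conditionally_complete_linorder, plus}"
  shows "\<exists>h1 h2. hdisj h1 h2 \<and> h = hunion h1 h2 \<and> sepsum f g (s, h) = f (s, h1) + g (s, h2)"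
proof -
  let ?S = "(\<lambda>(h1, h2). f (s, h1) + g (s, h2)) ` splits h"
  have "finite ?S" by (simp add: finite_splits)
  moreover have "(hemp, h) \<in> splits h" by (simp add: splits_def)
  then have "?S \<noteq> {}" by blast
  ultimately have "Inf ?S \<in> ?S" by (simp add: cInf_eq_Min)
  then show ?thesis unfolding sepsum_def sepsum_set[symmetric] by (auto simp: splits_def)
qed

type_synonym 'v ass = "'v state \<Rightarrow> ennreal"

lemma sepsum_mono:
  fixes f f' g g' :: "'v ass"
  assumes "f \<le> f'" "g \<le> g'"
  shows "sepsum f g \<le> sepsum f' g'"
proof (rule le_funI)
  fix \<sigma> :: "'v state"
  obtain s h where \<sigma>: "\<sigma> = (s, h)" by (cases \<sigma>)
  obtain h1 h2 where sp: "hdisj h1 h2" "h = hunion h1 h2"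
     "sepsum f' g' (s, h) = f' (s, h1) + g' (s, h2)" using sepsum_ex by blast
  have "sepsum f g (s, h) \<le> f (s, h1) + g (s, h2)" using sp sepsum_le by blast
  also have "\<dots> \<le> f' (s, h1) + g' (s, h2)" using assms by (simp add: add_mono le_funD)
  finally show "sepsum f g \<sigma> \<le> sepsum f' g' \<sigma>" using sp \<sigma> by simp
qed

lemma sepsum_assoc_le:
  fixes A B G :: "'v ass"
  shows "sepsum A (sepsum B G) \<sigma> \<le> sepsum (sepsum A B) G \<sigma>"
proof -
  obtain s h where \<sigma>: "\<sigma> = (s, h)" by (cases \<sigma>)
  obtain k1 k2 where sp: "hdisj k1 k2" "h = hunion k1 k2"
     "sepsum (sepsum A B) G (s, h) = sepsum A B (s, k1) + G (s, k2)" using sepsum_ex by blast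
  obtain k11 k12 where sp2: "hdisj k11 k12" "k1 = hunion k11 k12"
     "sepsum A B (s, k1) = A (s, k11) + B (s, k12)" using sepsum_ex by blast
  have d: "hdisj k12 k2" "hdisj k11 (hunion k12 k2)" "h = hunion k11 (hunion k12 k2)"
    using sp sp2 by (auto simp: hdisj_union_l hdisj_union_r hunion_assoc)
  have "sepsum A (sepsum B G) (s, h) \<le> A (s, k11) + sepsum B G (s, hunion k12 k2)"
    using d sepsum_le by blast
  also have "\<dots> \<le> A (s, k11) + (B (s, k12) + G (s, k2))"
    using d sepsum_le add_left_mono by blast
  finally show ?thesis using sp sp2 \<sigma> by (simp add: add.assoc)
qed

lemma tsub_mono: "a \<le> b \<Longrightarrow> tsub a c \<le> tsub b c"
  unfolding tsub_def by (auto intro: ennreal_minus_mono)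

lemma wand_mono:
  assumes ff: "f \<le> f'"
  shows "wand P f \<le> wand P f'"
proof (rule le_funI)
  fix \<sigma> :: "'a state"
  obtain s h where \<sigma>: "\<sigma> = (s, h)" by (cases \<sigma>)
  have "(SUP h'\<in>{h'. hdisj h h'}. tsub (f (s, hunion h h')) (P (s, h')))
       \<le> (SUP h'\<in>{h'. hdisj h h'}. tsub (f' (s, hunion h h')) (P (s, h')))"
    by (rule SUP_mono', rule tsub_mono, rule le_funD[OF ff])
  then show "wand P f \<sigma> \<le> wand P f' \<sigma>" unfolding wand_def \<sigma> by simp
qed

lemma subst_mono: "f \<le> f' \<Longrightarrow> subst f x e \<le> subst f' x e"
  unfolding subst_def by (auto intro!: le_funI le_funD[of f f'])

lemma wand_frame:
  fixes P F G :: "'v ass"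
  shows "wand P (sepsum F G) \<sigma> \<le> sepsum (wand P F) G \<sigma>"
proof -
  obtain s h where \<sigma>: "\<sigma> = (s, h)" by (cases \<sigma>)
  obtain ha hb where sp: "hdisj ha hb" "h = hunion ha hb"
     "sepsum (wand P F) G (s, h) = wand P F (s, ha) + G (s, hb)" using sepsum_ex by blast
  have "tsub (sepsum F G (s, hunion h h')) (P (s, h')) \<le> wand P F (s, ha) + G (s, hb)"
    if h': "hdisj h h'" for h'
  proof -
    have d1: "hdisj (hunion ha h') hb" "hdisj ha h'" "hdisj hb h'"
      using sp h' by (auto simp: hdisj_union_l hdisj_union_r hdisj_sym)
    have "hunion h h' = hunion (hunion ha h') hb"
      using sp(2) d1 by (metis hunion_assoc hunion_comm)
    note d = d1(1) this d1(2)
    have 1: "sepsum F G (s, hunion h h') \<le> F (s, hunion ha h') + G (s, hb)"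
      using d sepsum_le by blast
    have 2: "tsub (F (s, hunion ha h')) (P (s, h')) \<le> wand P F (s, ha)"
      unfolding wand_def using d(3) by (auto intro!: SUP_upper)
    have "tsub (sepsum F G (s, hunion h h')) (P (s, h'))
          \<le> tsub (F (s, hunion ha h') + G (s, hb)) (P (s, h'))" using 1 tsub_mono by blast
    also have "\<dots> \<le> tsub (F (s, hunion ha h')) (P (s, h')) + G (s, hb)"
      unfolding tsub_def by (auto simp: add_diff_le_ennreal add.commute)
    also have "\<dots> \<le> wand P F (s, ha) + G (s, hb)" using 2 by (simp add: add_right_mono)
    finally show ?thesis .
  qed
  then show ?thesis using sp \<sigma> unfolding wand_def[of P "sepsum F G"]
    by (auto intro!: SUP_least)
qed

lemma sepsum_cong_stack:
  "(\<And>h. A (s, h) = B (s, h)) \<Longrightarrow> sepsum A g (s, h) = sepsum B g (s, h)"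
  unfolding sepsum_def by simp

lemma ert_mono: "f \<le> f' \<Longrightarrow> ert C f \<le> ert C f'"
proof (induction C arbitrary: f f')
  case (While b c)
  show ?case unfolding ert.simps
  proof (rule lfp_mono, rule le_funI)
    fix Z :: "'a ass" and \<sigma> :: "'a state"
    have "f \<sigma> \<le> f' \<sigma>" using While.prems by (rule le_funD)
    then show "(if b (fst \<sigma>) then ert c Z \<sigma> else f \<sigma>) \<le> (if b (fst \<sigma>) then ert c Z \<sigma> else f' \<sigma>)"
      by simp
  qed
next
  case (Seq c1 c2)
  have "ert c2 f \<le> ert c2 f'" by (rule Seq.IH(2)[OF Seq.prems])
  then show ?case by (simp add: Seq.IH(1))
next
  case (PChoice c1 p c2)
  have 1: "ert c1 f \<le> ert c1 f'" by (rule PChoice.IH(1)[OF PChoice.prems])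
  have 2: "ert c2 f \<le> ert c2 f'" by (rule PChoice.IH(2)[OF PChoice.prems])
  show ?case
  proof (rule le_funI)
    fix \<sigma> :: "'a state"
    show "ert (PChoice c1 p c2) f \<sigma> \<le> ert (PChoice c1 p c2) f' \<sigma>"
      using le_funD[OF 1, of \<sigma>] le_funD[OF 2, of \<sigma>]
      by (simp add: add_mono mult_left_mono)
  qed
next
  case (If b c1 c2)
  have 1: "ert c1 f \<le> ert c1 f'" by (rule If.IH(1)[OF If.prems])
  have 2: "ert c2 f \<le> ert c2 f'" by (rule If.IH(2)[OF If.prems])
  show ?case
  proof (rule le_funI)
    fix \<sigma> :: "'a state"
    show "ert (If b c1 c2) f \<sigma> \<le> ert (If b c1 c2) f' \<sigma>"
      using le_funD[OF 1, of \<sigma>] le_funD[OF 2, of \<sigma>] by simp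
  qed
next
  case (Tick e)
  then show ?case by (simp add: sepsum_mono)
next
  case (Assign x e)
  then show ?case by (simp add: subst_mono)
next
  case (Alloc x e)
  show ?case
  proof (rule le_funI)
    fix \<sigma> :: "'a state"
    obtain s h where \<sigma>: "\<sigma> = (s, h)" by (cases \<sigma>)
    let ?B = "\<lambda>n. (\<lambda>(s', h'). bigsep (\<lambda>i. pt (\<lambda>_. n + i - 1) (\<lambda>_. 0)) (e s') (s', h'))"
    have "(SUP n. wand (?B n) (subst f x (\<lambda>_. n)) (s, h)) \<le> (SUP n. wand (?B n) (subst f' x (\<lambda>_. n)) (s, h))"
      by (rule SUP_mono', rule le_funD[OF wand_mono[OF subst_mono[OF Alloc.prems]]])
    then show "ert (Alloc x e) f \<sigma> \<le> ert (Alloc x e) f' \<sigma>" using \<sigma> by simp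
  qed
next
  case (Store e e')
  then show ?case by (simp add: sepsum_mono wand_mono)
next
  case (Load x e)
  show ?case
  proof (rule le_funI)
    fix \<sigma> :: "'a state"
    show "ert (Load x e) f \<sigma> \<le> ert (Load x e) f' \<sigma>"
      unfolding ert.simps
      by (rule INF_mono', rule le_funD[OF sepsum_mono[OF order.refl wand_mono[OF subst_mono[OF Load.prems]]]])
  qed
next
  case (Free e)
  then show ?case by (simp add: sepsum_mono)
qed

lemma subst_sepsum:
  fixes f g :: "'v ass"
  assumes "not_in_vars x g"
  shows "subst (sepsum f g) x e = sepsum (subst f x e) g"
  using assms unfolding subst_def sepsum_def not_in_vars_def
  by (auto intro!: ext)

lemma sepsum_SUP_le:
  fixes Q :: "nat \<Rightarrow> 'v ass" and g :: "'v ass"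
  shows "(SUP n. sepsum (Q n) g \<sigma>) \<le> sepsum (\<lambda>\<tau>. SUP n. Q n \<tau>) g \<sigma>"
proof (rule SUP_least)
  fix n
  have "Q n \<le> (\<lambda>\<tau>. SUP n. Q n \<tau>)" by (auto intro!: le_funI SUP_upper)
  then show "sepsum (Q n) g \<sigma> \<le> sepsum (\<lambda>\<tau>. SUP n. Q n \<tau>) g \<sigma>"
    by (rule le_funD[OF sepsum_mono[OF _ order.refl]])
qed

lemma sepsum_INF_le:
  fixes Q :: "nat \<Rightarrow> 'v ass" and g :: "'v ass"
  shows "(INF n. sepsum (Q n) g \<sigma>) \<le> sepsum (\<lambda>\<tau>. INF n. Q n \<tau>) g \<sigma>"
proof -
  obtain s h where \<sigma>: "\<sigma> = (s, h)" by (cases \<sigma>)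
  obtain h1 h2 where sp: "hdisj h1 h2" "h = hunion h1 h2"
     "sepsum (\<lambda>\<tau>. INF n. Q n \<tau>) g (s, h) = (INF n. Q n (s, h1)) + g (s, h2)"
    using sepsum_ex[where f="\<lambda>\<tau>. INF n. Q n \<tau>" and g=g and h=h and s=s] by blast
  have "(INF n. sepsum (Q n) g (s, h)) \<le> (INF n. Q n (s, h1) + g (s, h2))"
    using sp by (auto intro!: INF_mono' sepsum_le)
  also have "\<dots> = (INF n. Q n (s, h1)) + g (s, h2)" by (rule INF_ennreal_add_const)
  finally show ?thesis using sp \<sigma> by simp
qed

lemma semiring_aux: "(p::'a::comm_semiring_1) * (a + g) + q * (b + g) = p * a + q * b + (p + q) * g"
  by (simp add: algebra_simps)

lemma pchoice_sepsum_le: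
  fixes A B g :: "'v ass" and p :: real
  assumes "0 \<le> p" "p \<le> 1"
  shows "ennreal p * sepsum A g \<sigma> + ennreal (1 - p) * sepsum B g \<sigma>
     \<le> sepsum (\<lambda>\<tau>. ennreal p * A \<tau> + ennreal (1 - p) * B \<tau>) g \<sigma>"
proof -
  obtain s h where \<sigma>: "\<sigma> = (s, h)" by (cases \<sigma>)
  obtain h1 h2 where sp: "hdisj h1 h2" "h = hunion h1 h2"
     "sepsum (\<lambda>\<tau>. ennreal p * A \<tau> + ennreal (1 - p) * B \<tau>) g (s, h)
      = (ennreal p * A (s, h1) + ennreal (1 - p) * B (s, h1)) + g (s, h2)"
    using sepsum_ex[where f="\<lambda>\<tau>. ennreal p * A \<tau> + ennreal (1 - p) * B \<tau>" and g=g and h=h and s=s] by blast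
  have 1: "ennreal p + ennreal (1 - p) = 1"
  proof -
    have "ennreal (p + (1 - p)) = ennreal p + ennreal (1 - p)" using assms by (intro ennreal_plus) auto
    then show ?thesis by simp
  qed
  have "ennreal p * sepsum A g (s, h) + ennreal (1 - p) * sepsum B g (s, h)
     \<le> ennreal p * (A (s, h1) + g (s, h2)) + ennreal (1 - p) * (B (s, h1) + g (s, h2))"
    using sepsum_le[OF sp(1,2), of A g s] sepsum_le[OF sp(1,2), of B g s]
    by (intro add_mono mult_left_mono) simp_all
  also have "\<dots> = ennreal p * A (s, h1) + ennreal (1 - p) * B (s, h1)
       + (ennreal p + ennreal (1 - p)) * g (s, h2)"
    by (rule semiring_aux)
  also have "\<dots> = ennreal p * A (s, h1) + ennreal (1 - p) * B (s, h1) + g (s, h2)"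
    by (simp only: 1 mult_1)
  finally show ?thesis unfolding \<sigma> sp(3) .
qed

lemma ert_frame:
  fixes g :: "'v ass"
  shows "wf_prog C \<Longrightarrow> (\<forall>x\<in>modv C. not_in_vars x g) \<Longrightarrow>
    ert C (sepsum f g) \<le> sepsum (ert C f) g"
proof (induction C arbitrary: f)
  case (Tick e)
  then show ?case by (auto intro!: le_funI sepsum_assoc_le)
next
  case (Free e)
  then show ?case by (auto intro!: le_funI sepsum_assoc_le)
next
  case (Assign x e)
  then show ?case by (simp add: subst_sepsum)
next
  case (Alloc x e)
  then have nx: "not_in_vars x g" by simp
  show ?case
  proof (rule le_funI)
    fix \<sigma> :: "'v state"
    obtain s h where \<sigma>: "\<sigma> = (s, h)" by (cases \<sigma>)
    let ?B = "\<lambda>n. (\<lambda>(s', h'). bigsep (\<lambda>i. pt (\<lambda>_. n + i - 1) (\<lambda>_. 0)) (e s') (s', h'))"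
    have "ert (Alloc x e) (sepsum f g) (s, h)
        = (SUP n. wand (?B n) (sepsum (subst f x (\<lambda>_. n)) g) (s, h))"
      using nx by (simp add: subst_sepsum)
    also have "\<dots> \<le> (SUP n. sepsum (wand (?B n) (subst f x (\<lambda>_. n))) g (s, h))"
      by (intro SUP_mono' wand_frame)
    also have "\<dots> \<le> sepsum (\<lambda>\<tau>. SUP n. wand (?B n) (subst f x (\<lambda>_. n)) \<tau>) g (s, h)"
      by (rule sepsum_SUP_le)
    also have "\<dots> = sepsum (ert (Alloc x e) f) g (s, h)"
      by (simp add: case_prod_beta')
    finally show "ert (Alloc x e) (sepsum f g) \<sigma> \<le> sepsum (ert (Alloc x e) f) g \<sigma>"
      using \<sigma> by simp
  qed
next
  case (Store e e')
  have "sepsum (pt_any e) (wand (pt e e') (sepsum f g))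
      \<le> sepsum (pt_any e) (sepsum (wand (pt e e') f) g)"
    by (intro sepsum_mono order.refl le_funI wand_frame)
  also have "\<dots> \<le> sepsum (sepsum (pt_any e) (wand (pt e e') f)) g"
    by (intro le_funI sepsum_assoc_le)
  finally show ?case by simp
next
  case (Load x e)
  then have nx: "not_in_vars x g" by simp
  show ?case
  proof (rule le_funI)
    fix \<sigma> :: "'v state"
    let ?Q = "\<lambda>n. sepsum (pt e (\<lambda>_. n)) (wand (pt e (\<lambda>_. n)) (subst f x (\<lambda>_. n)))"
    have "ert (Load x e) (sepsum f g) \<sigma>
        = (INF n. sepsum (pt e (\<lambda>_. n)) (wand (pt e (\<lambda>_. n)) (sepsum (subst f x (\<lambda>_. n)) g)) \<sigma>)"
      using nx by (simp add: subst_sepsum)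
    also have "\<dots> \<le> (INF n. sepsum (?Q n) g \<sigma>)"
    proof (rule INF_mono')
      fix n
      have "sepsum (pt e (\<lambda>_. n)) (wand (pt e (\<lambda>_. n)) (sepsum (subst f x (\<lambda>_. n)) g))
          \<le> sepsum (pt e (\<lambda>_. n)) (sepsum (wand (pt e (\<lambda>_. n)) (subst f x (\<lambda>_. n))) g)"
        by (intro sepsum_mono order.refl le_funI wand_frame)
      also have "\<dots> \<le> sepsum (?Q n) g"
        by (intro le_funI sepsum_assoc_le)
      finally show "sepsum (pt e (\<lambda>_. n)) (wand (pt e (\<lambda>_. n)) (sepsum (subst f x (\<lambda>_. n)) g)) \<sigma>
          \<le> sepsum (?Q n) g \<sigma>" by (rule le_funD)
    qed
    also have "\<dots> \<le> sepsum (\<lambda>\<tau>. INF n. ?Q n \<tau>) g \<sigma>"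
      by (rule sepsum_INF_le)
    finally show "ert (Load x e) (sepsum f g) \<sigma> \<le> sepsum (ert (Load x e) f) g \<sigma>"
      by simp
  qed
next
  case (PChoice c1 p c2)
  show ?case
  proof (rule le_funI)
    fix \<sigma> :: "'v state"
    have p: "0 \<le> p (fst \<sigma>)" "p (fst \<sigma>) \<le> 1" using PChoice.prems by auto
    have "ert (PChoice c1 p c2) (sepsum f g) \<sigma>
       \<le> ennreal (p (fst \<sigma>)) * sepsum (ert c1 f) g \<sigma> + ennreal (1 - p (fst \<sigma>)) * sepsum (ert c2 f) g \<sigma>"
    proof -
      have "ert c1 (sepsum f g) \<le> sepsum (ert c1 f) g" "ert c2 (sepsum f g) \<le> sepsum (ert c2 f) g"
        using PChoice by auto
      then show ?thesis by (auto intro!: add_mono mult_left_mono dest: le_funD)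
    qed
    also have "\<dots> \<le> sepsum (\<lambda>\<tau>. ennreal (p (fst \<sigma>)) * ert c1 f \<tau> + ennreal (1 - p (fst \<sigma>)) * ert c2 f \<tau>) g \<sigma>"
      using p by (rule pchoice_sepsum_le)
    also have "\<dots> = sepsum (ert (PChoice c1 p c2) f) g \<sigma>"
      by (cases \<sigma>) (auto intro!: sepsum_cong_stack)
    finally show "ert (PChoice c1 p c2) (sepsum f g) \<sigma> \<le> sepsum (ert (PChoice c1 p c2) f) g \<sigma>" .
  qed
next
  case (If b c1 c2)
  show ?case
  proof (rule le_funI)
    fix \<sigma> :: "'v state"
    obtain s h where \<sigma>: "\<sigma> = (s, h)" by (cases \<sigma>)
    show "ert (If b c1 c2) (sepsum f g) \<sigma> \<le> sepsum (ert (If b c1 c2) f) g \<sigma>"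
    proof (cases "b s")
      case True
      have "ert c1 (sepsum f g) \<le> sepsum (ert c1 f) g" using If by auto
      then have "ert c1 (sepsum f g) \<sigma> \<le> sepsum (ert c1 f) g \<sigma>" by (rule le_funD)
      also have "\<dots> = sepsum (ert (If b c1 c2) f) g \<sigma>"
        using True \<sigma> by (auto intro!: sepsum_cong_stack)
      finally show ?thesis using True \<sigma> by simp
    next
      case False
      have "ert c2 (sepsum f g) \<le> sepsum (ert c2 f) g" using If by auto
      then have "ert c2 (sepsum f g) \<sigma> \<le> sepsum (ert c2 f) g \<sigma>" by (rule le_funD)
      also have "\<dots> = sepsum (ert (If b c1 c2) f) g \<sigma>"
        using False \<sigma> by (auto intro!: sepsum_cong_stack)
      finally show ?thesis using False \<sigma> by simp
    qed
  qed
next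
  case (Seq c1 c2)
  have "ert c1 (ert c2 (sepsum f g)) \<le> ert c1 (sepsum (ert c2 f) g)"
    using Seq by (intro ert_mono) auto
  also have "\<dots> \<le> sepsum (ert c1 (ert c2 f)) g" using Seq by auto
  finally show ?case by simp
next
  case (While b c)
  let ?F = "\<lambda>f g \<sigma>. if b (fst \<sigma>) then ert c g \<sigma> else f \<sigma>"
  have mono: "mono (?F f)" for f
    by (auto intro!: monoI le_funI simp: le_funD[OF ert_mono])
  let ?L = "lfp (?F f)"
  have L: "?L = ?F f ?L" by (rule lfp_unfold[OF mono])
  have "?F (sepsum f g) (sepsum ?L g) \<le> sepsum ?L g"
  proof (rule le_funI)
    fix \<sigma> :: "'v state"
    obtain s h where \<sigma>: "\<sigma> = (s, h)" by (cases \<sigma>)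
    show "?F (sepsum f g) (sepsum ?L g) \<sigma> \<le> sepsum ?L g \<sigma>"
    proof (cases "b s")
      case True
      have "ert c (sepsum ?L g) \<le> sepsum (ert c ?L) g" using While by auto
      then have "ert c (sepsum ?L g) \<sigma> \<le> sepsum (ert c ?L) g \<sigma>" by (rule le_funD)
      also have "\<dots> = sepsum ?L g \<sigma>"
        using True \<sigma> by (auto intro!: sepsum_cong_stack simp: fun_cong[OF L, of "(s, _)"])
      finally show ?thesis using True \<sigma> by simp
    next
      case False
      have "sepsum f g \<sigma> = sepsum ?L g \<sigma>"
        using False \<sigma> by (auto intro!: sepsum_cong_stack simp: fun_cong[OF L, of "(s, _)"])
      then show ?thesis using False \<sigma> by simp
    qed
  qed
  then have "lfp (?F (sepsum f g)) \<le> sepsum ?L g" by (rule lfp_lowerbound)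
  then show ?case by simp
qed

definition Phi :: "('v state \<Rightarrow> real) \<Rightarrow> ('v state \<Rightarrow> ereal) \<Rightarrow> 'v ass" where
  "Phi \<pi> X = (\<lambda>\<tau>. e2ennreal (X \<tau> + ereal (\<pi> \<tau>)))"

definition Psi :: "('v state \<Rightarrow> real) \<Rightarrow> 'v ass \<Rightarrow> 'v state \<Rightarrow> ereal" where
  "Psi \<pi> f = (\<lambda>\<sigma>. enn2ereal (f \<sigma>) - ereal (\<pi> \<sigma>))"

lemma ereal_cancel1: "- ereal r \<le> a \<Longrightarrow> enn2ereal (e2ennreal (a + ereal r)) - ereal r = a"
proof -
  assume "- ereal r \<le> a"
  then have "0 \<le> a + ereal r" by (cases a) auto
  then have "enn2ereal (e2ennreal (a + ereal r)) = a + ereal r" by (simp add: enn2ereal_e2ennreal)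
  then show ?thesis by (cases a) auto
qed

lemma PsiPhi: "- ereal (\<pi> \<sigma>) \<le> X \<sigma> \<Longrightarrow> Psi \<pi> (Phi \<pi> X) \<sigma> = X \<sigma>"
  unfolding Psi_def Phi_def by (simp add: ereal_cancel1)

lemma PhiPsi: "Phi \<pi> (Psi \<pi> f) = f"
proof (rule ext)
  fix \<sigma>
  have "enn2ereal (f \<sigma>) - ereal (\<pi> \<sigma>) + ereal (\<pi> \<sigma>) = enn2ereal (f \<sigma>)"
    using enn2ereal_nonneg[of "f \<sigma>"] by (cases "enn2ereal (f \<sigma>)") auto
  then show "Phi \<pi> (Psi \<pi> f) \<sigma> = f \<sigma>" unfolding Phi_def Psi_def by simp
qed

lemma Psi_ge: "- ereal (\<pi> \<sigma>) \<le> Psi \<pi> f \<sigma>"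
  unfolding Psi_def using enn2ereal_nonneg[of "f \<sigma>"]
  by (cases "enn2ereal (f \<sigma>)") auto

lemma Psi_mono: "f \<sigma> \<le> g \<sigma> \<Longrightarrow> Psi \<pi> f \<sigma> \<le> Psi \<pi> g \<sigma>"
  unfolding Psi_def by (simp add: ereal_minus_mono less_eq_ennreal.rep_eq)

lemma Phi_mono: "X \<sigma> \<le> Y \<sigma> \<Longrightarrow> Phi \<pi> X \<sigma> \<le> Phi \<pi> Y \<sigma>"
  unfolding Phi_def by (simp add: e2ennreal_mono add_right_mono)

lemma sepsum_tm: "sepsum (tm e) f (s, h) = ennreal (real (e s)) + f (s, h)"
proof (rule antisym)
  show "sepsum (tm e) f (s, h) \<le> ennreal (real (e s)) + f (s, h)"
    using sepsum_le[of hemp h h "tm e" f s] by (simp add: tm_def)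
  obtain h1 h2 where sp: "hdisj h1 h2" "h = hunion h1 h2"
     "sepsum (tm e) f (s, h) = tm e (s, h1) + f (s, h2)" using sepsum_ex by blast
  show "ennreal (real (e s)) + f (s, h) \<le> sepsum (tm e) f (s, h)"
    using sp by (cases "h1 = hemp") (auto simp: tm_def)
qed

lemma ereal_pchoice:
  fixes a b :: ereal and p r :: real
  assumes "0 \<le> a" "0 \<le> b" "0 \<le> p" "p \<le> 1"
  shows "ereal p * (a - ereal r) + ereal (1 - p) * (b - ereal r)
       = ereal p * a + ereal (1 - p) * b - ereal r"
proof (cases a)
  case (real x) note a = this
  then show ?thesis
  proof (cases b)
    case (real y)
    then show ?thesis using a by (simp add: algebra_simps)
  next
    case PInf
    then show ?thesis using a assms by (cases "p = 1") auto
  qed (use assms in auto)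
next
  case PInf
  then show ?thesis using assms
    by (cases b; cases "p = 0"; cases "p = 1") auto
qed (use assms in auto)

lemma tick_step: "enn2ereal (ennreal (real n) + x) - ereal r = ereal (real n) + (enn2ereal x - ereal r)"
  by (cases "enn2ereal x") (auto simp: plus_ennreal.rep_eq)

lemma corr:
  "wf_prog C \<Longrightarrow> (\<forall>\<sigma>. - ereal (\<pi> \<sigma>) \<le> X \<sigma>) \<Longrightarrow> aert \<pi> C X = Psi \<pi> (ert C (Phi \<pi> X))"
proof (induction C arbitrary: X)
  case (Tick e)
  show ?case
  proof (rule ext)
    fix \<sigma> :: "'a state"
    obtain s h where \<sigma>: "\<sigma> = (s, h)" by (cases \<sigma>)
    have x: "- ereal (\<pi> \<sigma>) \<le> X \<sigma>" using Tick.prems(2) by (rule spec)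
    have "Psi \<pi> (ert (Tick e) (Phi \<pi> X)) \<sigma>
       = enn2ereal (ennreal (real (e s)) + e2ennreal (X \<sigma> + ereal (\<pi> \<sigma>))) - ereal (\<pi> \<sigma>)"
      using \<sigma> by (simp add: Psi_def Phi_def sepsum_tm)
    also have "\<dots> = ereal (real (e s)) + (enn2ereal (e2ennreal (X \<sigma> + ereal (\<pi> \<sigma>))) - ereal (\<pi> \<sigma>))"
      by (rule tick_step)
    also have "\<dots> = ereal (real (e s)) + X \<sigma>" using x by (simp add: ereal_cancel1)
    finally show "aert \<pi> (Tick e) X \<sigma> = Psi \<pi> (ert (Tick e) (Phi \<pi> X)) \<sigma>" using \<sigma> by simp
  qed
next
  case (Assign x e) then show ?case by (simp add: aert_atomic_def Psi_def Phi_def)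
next
  case (Alloc x e) then show ?case by (simp add: aert_atomic_def Psi_def Phi_def)
next
  case (Store x e) then show ?case by (simp add: aert_atomic_def Psi_def Phi_def)
next
  case (Load x e) then show ?case by (simp add: aert_atomic_def Psi_def Phi_def)
next
  case (Free e) then show ?case by (simp add: aert_atomic_def Psi_def Phi_def)
next
  case (PChoice c1 p c2)
  show ?case
  proof (rule ext)
    fix \<sigma> :: "'a state"
    have p: "0 \<le> p (fst \<sigma>)" "p (fst \<sigma>) \<le> 1" using PChoice.prems by auto
    have i1: "aert \<pi> c1 X = Psi \<pi> (ert c1 (Phi \<pi> X))"
      by (rule PChoice.IH(1)) (use PChoice.prems in auto)
    have i2: "aert \<pi> c2 X = Psi \<pi> (ert c2 (Phi \<pi> X))"
      by (rule PChoice.IH(2)) (use PChoice.prems in auto)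
    show "aert \<pi> (PChoice c1 p c2) X \<sigma> = Psi \<pi> (ert (PChoice c1 p c2) (Phi \<pi> X)) \<sigma>"
      using p by (simp add: i1 i2 Psi_def plus_ennreal.rep_eq times_ennreal.rep_eq ereal_pchoice)
  qed
next
  case (If b c1 c2)
  have i1: "aert \<pi> c1 X = Psi \<pi> (ert c1 (Phi \<pi> X))"
    by (rule If.IH(1)) (use If.prems in auto)
  have i2: "aert \<pi> c2 X = Psi \<pi> (ert c2 (Phi \<pi> X))"
    by (rule If.IH(2)) (use If.prems in auto)
  show ?case by (rule ext) (simp add: i1 i2 Psi_def)
next
  case (Seq c1 c2)
  have i2: "aert \<pi> c2 X = Psi \<pi> (ert c2 (Phi \<pi> X))"
    by (rule Seq.IH(2)) (use Seq.prems in auto)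
  have "aert \<pi> c1 (Psi \<pi> (ert c2 (Phi \<pi> X))) = Psi \<pi> (ert c1 (Phi \<pi> (Psi \<pi> (ert c2 (Phi \<pi> X)))))"
    by (rule Seq.IH(1)) (use Seq.prems Psi_ge in auto)
  then show ?case by (simp add: i2 PhiPsi)
next
  case (While b c)
  have IH: "\<And>Y. (\<forall>\<sigma>. - ereal (\<pi> \<sigma>) \<le> Y \<sigma>) \<Longrightarrow> aert \<pi> c Y = Psi \<pi> (ert c (Phi \<pi> Y))"
    using While by auto
  have xA: "\<forall>\<sigma>. - ereal (\<pi> \<sigma>) \<le> X \<sigma>" using While by auto
  define Fb where "Fb = (\<lambda>Y \<sigma>. if b (fst \<sigma>) then aert \<pi> c Y \<sigma> else X \<sigma>)"
  define S where "S = {Y. (\<forall>\<sigma>. - ereal (\<pi> \<sigma>) \<le> Y \<sigma>) \<and> (\<forall>\<sigma>. Fb Y \<sigma> \<le> Y \<sigma>)}"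
  define G where "G = (\<lambda>g \<sigma>. if b (fst \<sigma>) then ert c g \<sigma> else Phi \<pi> X \<sigma>)"
  have aW: "aert \<pi> (While b c) X = Inf S" unfolding S_def Fb_def by simp
  have eW: "ert (While b c) (Phi \<pi> X) = lfp G" unfolding G_def by simp
  have monoG: "mono G" unfolding G_def
    by (auto intro!: monoI le_funI simp: le_funD[OF ert_mono])
  define L where "L = lfp G"
  have L: "G L = L" unfolding L_def using lfp_unfold[OF monoG] by simp
  have "Psi \<pi> L \<in> S"
  proof -
    have "Fb (Psi \<pi> L) \<sigma> = Psi \<pi> L \<sigma>" for \<sigma>
    proof -
      have PL: "\<forall>\<sigma>. - ereal (\<pi> \<sigma>) \<le> Psi \<pi> L \<sigma>" using Psi_ge by blast
      have "Fb (Psi \<pi> L) \<sigma> = Psi \<pi> (G L) \<sigma>"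
      proof (cases "b (fst \<sigma>)")
        case True
        have "aert \<pi> c (Psi \<pi> L) = Psi \<pi> (ert c (Phi \<pi> (Psi \<pi> L)))" by (rule IH[OF PL])
        then have "Fb (Psi \<pi> L) \<sigma> = Psi \<pi> (ert c L) \<sigma>" using True by (simp add: Fb_def PhiPsi)
        moreover have "Psi \<pi> (G L) \<sigma> = Psi \<pi> (ert c L) \<sigma>" using True by (simp add: G_def Psi_def)
        ultimately show ?thesis by simp
      next
        case False
        have "Psi \<pi> (Phi \<pi> X) \<sigma> = X \<sigma>" by (rule PsiPhi) (use xA in blast)
        then show ?thesis using False by (simp add: Fb_def G_def Psi_def)
      qed
      then show ?thesis using L by simp
    qed
    then show ?thesis unfolding S_def using Psi_ge by auto
  qed
  then have le1: "Inf S \<le> Psi \<pi> L" by (rule Inf_lower)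
  define Y0 where "Y0 = Inf S"
  have Y0A: "- ereal (\<pi> \<sigma>) \<le> Y0 \<sigma>" for \<sigma>
    unfolding Y0_def Inf_apply S_def by (rule INF_greatest) blast
  have amono: "aert \<pi> c Y0 \<sigma> \<le> aert \<pi> c Y \<sigma>" if "Y \<in> S" for Y \<sigma>
  proof -
    have YA: "\<forall>\<sigma>. - ereal (\<pi> \<sigma>) \<le> Y \<sigma>" using that unfolding S_def by blast
    have "Y0 \<le> Y" unfolding Y0_def using that by (rule Inf_lower)
    then have "Phi \<pi> Y0 \<le> Phi \<pi> Y" by (auto intro!: le_funI Phi_mono dest: le_funD)
    then have "ert c (Phi \<pi> Y0) \<le> ert c (Phi \<pi> Y)" by (rule ert_mono)
    then have le: "ert c (Phi \<pi> Y0) \<sigma> \<le> ert c (Phi \<pi> Y) \<sigma>" by (rule le_funD)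
    have e1: "aert \<pi> c Y0 = Psi \<pi> (ert c (Phi \<pi> Y0))" by (rule IH) (use Y0A in blast)
    have e2: "aert \<pi> c Y = Psi \<pi> (ert c (Phi \<pi> Y))" by (rule IH[OF YA])
    show ?thesis unfolding e1 e2 using le by (rule Psi_mono)
  qed
  have FY0: "Fb Y0 \<sigma> \<le> Y0 \<sigma>" for \<sigma>
  proof -
    have "Fb Y0 \<sigma> \<le> Y \<sigma>" if "Y \<in> S" for Y
    proof -
      have "Fb Y0 \<sigma> \<le> Fb Y \<sigma>" unfolding Fb_def using amono[OF that] by auto
      also have "\<dots> \<le> Y \<sigma>" using that unfolding S_def by blast
      finally show ?thesis .
    qed
    then have "Fb Y0 \<sigma> \<le> (INF Y\<in>S. Y \<sigma>)" by (rule INF_greatest)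
    moreover have "Y0 \<sigma> = (INF Y\<in>S. Y \<sigma>)" unfolding Y0_def by (rule Inf_apply)
    ultimately show ?thesis by simp
  qed
  have "G (Phi \<pi> Y0) \<le> Phi \<pi> Y0"
  proof (rule le_funI)
    fix \<sigma>
    show "G (Phi \<pi> Y0) \<sigma> \<le> Phi \<pi> Y0 \<sigma>"
    proof (cases "b (fst \<sigma>)")
      case True
      have "aert \<pi> c Y0 = Psi \<pi> (ert c (Phi \<pi> Y0))" by (rule IH) (use Y0A in blast)
      then have "ert c (Phi \<pi> Y0) = Phi \<pi> (aert \<pi> c Y0)" by (simp add: PhiPsi)
      moreover have "aert \<pi> c Y0 \<sigma> \<le> Y0 \<sigma>" using FY0[of \<sigma>] True by (simp add: Fb_def)
      then have "Phi \<pi> (aert \<pi> c Y0) \<sigma> \<le> Phi \<pi> Y0 \<sigma>" by (rule Phi_mono)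
      ultimately show ?thesis using True by (simp add: G_def)
    next
      case False
      have "X \<sigma> \<le> Y0 \<sigma>" using FY0[of \<sigma>] False by (simp add: Fb_def)
      then have "Phi \<pi> X \<sigma> \<le> Phi \<pi> Y0 \<sigma>" by (rule Phi_mono)
      then show ?thesis using False by (simp add: G_def)
    qed
  qed
  then have "L \<le> Phi \<pi> Y0" unfolding L_def by (rule lfp_lowerbound)
  then have le2: "Psi \<pi> L \<le> Y0"
  proof -
    assume LY: "L \<le> Phi \<pi> Y0"
    show ?thesis
    proof (rule le_funI)
      fix \<sigma>
      have "Psi \<pi> L \<sigma> \<le> Psi \<pi> (Phi \<pi> Y0) \<sigma>" by (rule Psi_mono) (rule le_funD[OF LY])
      also have "\<dots> = Y0 \<sigma>" by (rule PsiPhi[OF Y0A])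
      finally show "Psi \<pi> L \<sigma> \<le> Y0 \<sigma>" .
    qed
  qed
  have "Inf S = Psi \<pi> L" using le1 le2 unfolding Y0_def by (rule antisym)
  then show ?case using aW eW unfolding L_def by simp
qed

lemma e2ennreal_add: "0 \<le> a \<Longrightarrow> 0 \<le> b \<Longrightarrow> e2ennreal (a + b) = e2ennreal a + e2ennreal b"
  by (metis enn2ereal_e2ennreal enn2ereal_inject plus_ennreal.rep_eq add_nonneg_nonneg)

theorem mainTheorem6:
  fixes \<pi>1 \<pi>2 :: "('v::finite) state \<Rightarrow> real"
    and C :: "'v prog"
    and X :: "'v state \<Rightarrow> ereal"
  assumes pot1: "\<forall>\<sigma>. 0 \<le> \<pi>1 \<sigma>"
    and pot2: "\<forall>\<sigma>. 0 \<le> \<pi>2 \<sigma>"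
    and le: "\<forall>\<sigma>. \<pi>1 \<sigma> \<le> sepsum \<pi>1 \<pi>2 \<sigma>"
    and wf: "wf_prog C"
    and XA: "\<forall>\<sigma>. - ereal (\<pi>1 \<sigma>) \<le> X \<sigma>"
    and modC: "\<forall>x \<in> modv C. not_in_vars x \<pi>2"
    and Xle: "\<forall>\<sigma>. X \<sigma> + ereal (sepsum \<pi>1 \<pi>2 \<sigma>)
                  \<le> sepsum (\<lambda>\<tau>. X \<tau> + ereal (\<pi>1 \<tau>)) (\<lambda>\<tau>. ereal (\<pi>2 \<tau>)) \<sigma>"
  shows "\<forall>\<sigma>. aert (sepsum \<pi>1 \<pi>2) C X \<sigma>
            \<le> sepsum (\<lambda>\<tau>. aert \<pi>1 C X \<tau> + ereal (\<pi>1 \<tau>)) (\<lambda>\<tau>. ereal (\<pi>2 \<tau>)) \<sigma>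
              - ereal (sepsum \<pi>1 \<pi>2 \<sigma>)"
proof
  fix \<sigma> :: "'v state"
  define P where "P = sepsum \<pi>1 \<pi>2"
  define G :: "'v ass" where "G = (\<lambda>\<tau>. ennreal (\<pi>2 \<tau>))"
  define E where "E = ert C (Phi \<pi>1 X)"
  have XP: "\<forall>\<sigma>. - ereal (P \<sigma>) \<le> X \<sigma>"
  proof
    fix \<sigma>
    have "\<pi>1 \<sigma> \<le> P \<sigma>" using le unfolding P_def by (rule spec)
    then have "- ereal (P \<sigma>) \<le> - ereal (\<pi>1 \<sigma>)" by simp
    then show "- ereal (P \<sigma>) \<le> X \<sigma>" using XA order_trans by blast
  qed
  have Y1: "aert \<pi>1 C X = Psi \<pi>1 E" unfolding E_def using corr[OF wf XA] .
  have Y12: "aert P C X = Psi P (ert C (Phi P X))" using corr[OF wf XP] .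
  have nG: "\<forall>x\<in>modv C. not_in_vars x G"
    using modC unfolding not_in_vars_def G_def by simp
  have step1: "Phi P X \<le> sepsum (Phi \<pi>1 X) G"
  proof (rule le_funI)
    fix \<tau> :: "'v state"
    obtain s h where \<tau>: "\<tau> = (s, h)" by (cases \<tau>)
    obtain h1 h2 where sp: "hdisj h1 h2" "h = hunion h1 h2"
      "sepsum (Phi \<pi>1 X) G (s, h) = Phi \<pi>1 X (s, h1) + G (s, h2)"
      using sepsum_ex by blast
    have x1: "0 \<le> X (s, h1) + ereal (\<pi>1 (s, h1))"
      using spec[OF XA, of "(s, h1)"] by (cases "X (s, h1)") auto
    have "X \<tau> + ereal (P \<tau>)
       \<le> sepsum (\<lambda>\<tau>. X \<tau> + ereal (\<pi>1 \<tau>)) (\<lambda>\<tau>. ereal (\<pi>2 \<tau>)) (s, h)"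
      using spec[OF Xle, of \<tau>] \<tau> unfolding P_def by simp
    also have "\<dots> \<le> (X (s, h1) + ereal (\<pi>1 (s, h1))) + ereal (\<pi>2 (s, h2))"
      using sp sepsum_le by blast
    finally have "Phi P X \<tau> \<le> e2ennreal ((X (s, h1) + ereal (\<pi>1 (s, h1))) + ereal (\<pi>2 (s, h2)))"
      unfolding Phi_def by (rule e2ennreal_mono)
    also have "\<dots> = Phi \<pi>1 X (s, h1) + G (s, h2)"
      using x1 pot2 unfolding Phi_def G_def by (simp add: e2ennreal_add)
    finally show "Phi P X \<tau> \<le> sepsum (Phi \<pi>1 X) G \<tau>" using sp \<tau> by simp
  qed
  have step2: "ert C (Phi P X) \<le> sepsum E G"
  proof -
    have "ert C (Phi P X) \<le> ert C (sepsum (Phi \<pi>1 X) G)" using step1 by (rule ert_mono)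
    also have "\<dots> \<le> sepsum E G" unfolding E_def using ert_frame[OF wf nG] .
    finally show ?thesis .
  qed
  have step3: "enn2ereal (sepsum E G \<sigma>)
      \<le> sepsum (\<lambda>\<tau>. aert \<pi>1 C X \<tau> + ereal (\<pi>1 \<tau>)) (\<lambda>\<tau>. ereal (\<pi>2 \<tau>)) \<sigma>"
  proof -
    obtain s h where \<sigma>: "\<sigma> = (s, h)" by (cases \<sigma>)
    obtain h1 h2 where sp: "hdisj h1 h2" "h = hunion h1 h2"
      "sepsum (\<lambda>\<tau>. aert \<pi>1 C X \<tau> + ereal (\<pi>1 \<tau>)) (\<lambda>\<tau>. ereal (\<pi>2 \<tau>)) (s, h)
       = (aert \<pi>1 C X (s, h1) + ereal (\<pi>1 (s, h1))) + ereal (\<pi>2 (s, h2))"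
      using sepsum_ex by blast
    have e: "aert \<pi>1 C X (s, h1) + ereal (\<pi>1 (s, h1)) = enn2ereal (E (s, h1))"
      unfolding Y1 Psi_def using enn2ereal_nonneg[of "E (s, h1)"]
      by (cases "enn2ereal (E (s, h1))") auto
    have "sepsum E G (s, h) \<le> E (s, h1) + G (s, h2)" using sp sepsum_le by blast
    then have "enn2ereal (sepsum E G (s, h)) \<le> enn2ereal (E (s, h1)) + ereal (\<pi>2 (s, h2))"
      using pot2 unfolding G_def by (simp add: less_eq_ennreal.rep_eq plus_ennreal.rep_eq)
    then show ?thesis using sp e \<sigma> by simp
  qed
  have "aert P C X \<sigma> = enn2ereal (ert C (Phi P X) \<sigma>) - ereal (P \<sigma>)"
    unfolding Y12 Psi_def by simp
  also have "\<dots> \<le> enn2ereal (sepsum E G \<sigma>) - ereal (P \<sigma>)"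
    using le_funD[OF step2, of \<sigma>]
    by (intro ereal_minus_mono) (auto simp: less_eq_ennreal.rep_eq)
  also have "\<dots> \<le> sepsum (\<lambda>\<tau>. aert \<pi>1 C X \<tau> + ereal (\<pi>1 \<tau>)) (\<lambda>\<tau>. ereal (\<pi>2 \<tau>)) \<sigma> - ereal (P \<sigma>)"
    using step3 by (intro ereal_minus_mono) auto
  finally show "aert (sepsum \<pi>1 \<pi>2) C X \<sigma>
            \<le> sepsum (\<lambda>\<tau>. aert \<pi>1 C X \<tau> + ereal (\<pi>1 \<tau>)) (\<lambda>\<tau>. ereal (\<pi>2 \<tau>)) \<sigma>
              - ereal (sepsum \<pi>1 \<pi>2 \<sigma>)" unfolding P_def .
qed

end
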